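(* In the setting of the context, fix $k$ and assume that the MHDM iterate $x_k$ minimizes $x\mapsto\frac{\lambda_k}{2}\|Tx-f\|^2+J(x)$. Let $u_{k+1}=x_{k+1}-x_k$ and $\xi_{k+1}=\lambda_{k+1}T^*(f-Tx_{k+1})\in\partial J(u_{k+1})$. Then $x_{k+1}$ minimizes $x\mapsto\frac{\lambda_{k+1}}{2}\|Tx-f\|^2+J(x)$ if and only if $$J(u_{k+1})-J(x_{k+1})-\langle\xi_{k+1},u_{k+1}-x_{k+1}\rangle=0 .$$
   Context: $X$ Banach, $H$ Hilbert, $T\in\mathcal L(X,H)$, $f\in H$, $J:X\to[0,\infty]$ a seminorm ($J(\alpha x)=|\alpha|J(x)$, $J(x+y)\le J(x)+J(y)$) such that the relevant Tikhonov-type functionals have minimizers, $(\lambda_k)$ an increasing sequence of positive parameters. MHDM: $x_0\in\arg\min_x\frac{\lambda_0}{2}\|Tx-f\|^2+J(x)$, and for $k\ge1$, $x_k\in\arg\min_x\frac{\lambda_k}{2}\|Tx-f\|^2+J(x-x_{k-1})$. Subgradient $\partial J(x_0)=\{x^*\in X^*:\langle x^*,x-x_0\rangle\le J(x)-J(x_0)\ \forall x\}$. *)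

theory Defs
  imports "HOL-Analysis.Analysis"
begin

definition ext_seminorm :: "('x::real_vector \<Rightarrow> ereal) \<Rightarrow> bool" where
  "ext_seminorm J \<longleftrightarrow> (\<forall>x. 0 \<le> J x) \<and>
     (\<forall>a x. J (a *\<^sub>R x) = ereal \<bar>a\<bar> * J x) \<and>
     (\<forall>x y. J (x + y) \<le> J x + J y)"

definition tikh :: "('x \<Rightarrow> 'h::real_normed_vector) \<Rightarrow> 'h \<Rightarrow> real \<Rightarrow> ('x \<Rightarrow> ereal) \<Rightarrow> 'x \<Rightarrow> ereal" where
  "tikh T f lam J x = ereal (lam / 2 * (norm (T x - f))\<^sup>2) + J x"

definition is_minimizer :: "('x \<Rightarrow> ereal) \<Rightarrow> 'x \<Rightarrow> bool" where
  "is_minimizer F x \<longleftrightarrow> (\<forall>y. F x \<le> F y)"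

end

theory Submission
  imports Defs
begin

lemma helper_lim:
  fixes a b C :: real
  assumes C: "C \<ge> 0" and h: "\<And>t. 0 < t \<Longrightarrow> t < 1 \<Longrightarrow> a \<le> b + t * C"
  shows "a \<le> b"
proof (rule ccontr)
  assume "\<not> a \<le> b"
  then have d: "a - b > 0" by simp
  define t where "t = min (1/2) ((a - b) / (2 * (C + 1)))"
  have t0: "0 < t" using d C by (simp add: t_def)
  have t1: "t < 1" by (simp add: t_def)
  have "t * C \<le> ((a - b) / (2 * (C + 1))) * C"
    using C by (intro mult_right_mono) (auto simp: t_def)
  also have "\<dots> < a - b"
  proof -
    have "((a - b) / (2 * (C + 1))) * C = (a - b) * (C / (2 * (C + 1)))" by simp
    also have "\<dots> < (a - b) * 1"
      using d C by (intro mult_strict_left_mono) (auto simp: field_simps)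
    finally show ?thesis by simp
  qed
  finally show False using h[OF t0 t1] by simp
qed

lemma norm_expand:
  fixes a b :: "'h::real_inner"
  shows "(norm (a + t *\<^sub>R b))\<^sup>2 = (norm a)\<^sup>2 + 2 * t * inner a b + t\<^sup>2 * (norm b)\<^sup>2"
  unfolding power2_norm_eq_inner
  by (simp add: inner_add_left inner_add_right inner_commute power2_eq_square algebra_simps)

lemma J_zero:
  assumes J: "ext_seminorm J"
  shows "J 0 = 0"
proof -
  have "J ((0::real) *\<^sub>R 0) = ereal \<bar>0\<bar> * J 0" using J unfolding ext_seminorm_def by blast
  then show ?thesis by (cases "J 0") simp_all
qed

lemma lemmaA:
  fixes T :: "'x::real_normed_vector \<Rightarrow> 'h::real_inner"
  assumes T: "bounded_linear T" and J: "ext_seminorm J" and lam: "0 < lam"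
    and mz: "is_minimizer (tikh T f lam J) z"
  shows "J z = ereal (lam * inner (f - T z) (T z))"
    and "\<forall>v. ereal (lam * inner (f - T z) (T v)) \<le> J v"
proof -
  interpret T: bounded_linear T by (rule T)
  have Jnn: "\<And>y. 0 \<le> J y" using J unfolding ext_seminorm_def by blast
  have Jh: "\<And>a y. J (a *\<^sub>R y) = ereal \<bar>a\<bar> * J y" using J unfolding ext_seminorm_def by blast
  have Jt: "\<And>y w. J (y + w) \<le> J y + J w" using J unfolding ext_seminorm_def by blast
  have mzy: "\<And>y. tikh T f lam J z \<le> tikh T f lam J y" using mz unfolding is_minimizer_def by blast
  define r where "r = T z - f"
  have "tikh T f lam J z \<le> tikh T f lam J 0" by (rule mzy)
  also have "\<dots> = ereal (lam / 2 * (norm f)\<^sup>2)" using J_zero[OF J] by (simp add: tikh_def)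
  finally have le: "ereal (lam / 2 * (norm (T z - f))\<^sup>2) + J z \<le> ereal (lam / 2 * (norm f)\<^sup>2)"
    unfolding tikh_def .
  have "J z \<noteq> \<infinity>"
  proof
    assume "J z = \<infinity>"
    then show False using le by simp
  qed
  then have "J z < \<infinity>" by (simp add: less_PInf_Ex_of_nat)
  then obtain jz where jz: "J z = ereal jz" using Jnn[of z]
    by (cases "J z") auto
  have ineq: "ereal (lam * inner (f - T z) (T v)) \<le> J v" for v
  proof (cases "J v")
    case (real jv)
    have "lam * inner (f - T z) (T v) \<le> jv"
    proof (rule helper_lim[where C = "lam / 2 * (norm (T v))\<^sup>2"])
      fix t :: real assume t: "0 < t" "t < 1"
      have "tikh T f lam J z \<le> tikh T f lam J (z + t *\<^sub>R v)" by (rule mzy)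
      also have "\<dots> \<le> ereal (lam / 2 * (norm (r + t *\<^sub>R T v))\<^sup>2) + (J z + J (t *\<^sub>R v))"
      proof -
        have e: "T (z + t *\<^sub>R v) - f = r + t *\<^sub>R T v" by (simp add: r_def T.add T.scaleR algebra_simps)
        show ?thesis unfolding tikh_def e by (rule add_left_mono[OF Jt])
      qed
      also have "\<dots> = ereal (lam / 2 * (norm (r + t *\<^sub>R T v))\<^sup>2 + jz + t * jv)"
        using t by (simp add: Jh jz real)
      finally have "lam / 2 * (norm r)\<^sup>2 + jz \<le> lam / 2 * (norm (r + t *\<^sub>R T v))\<^sup>2 + jz + t * jv"
        by (simp add: tikh_def jz r_def)
      then have "0 \<le> t * (lam * inner r (T v) + t * (lam / 2 * (norm (T v))\<^sup>2) + jv)"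
        unfolding norm_expand by (simp add: algebra_simps power2_eq_square)
      then have "0 \<le> lam * inner r (T v) + t * (lam / 2 * (norm (T v))\<^sup>2) + jv"
        using t by (simp add: zero_le_mult_iff)
      moreover have "lam * inner (f - T z) (T v) = - (lam * inner r (T v))"
        by (simp add: r_def inner_diff_left algebra_simps)
      ultimately show "lam * inner (f - T z) (T v) \<le> jv + t * (lam / 2 * (norm (T v))\<^sup>2)"
        by linarith
    qed (use lam in simp)
    then show ?thesis using real by simp
  next
    case PInf then show ?thesis by simp
  next
    case MInf then show ?thesis using Jnn[of v] by simp
  qed
  then show "\<forall>v. ereal (lam * inner (f - T z) (T v)) \<le> J v" by blast
  have "jz \<le> lam * inner (f - T z) (T z)"
  proof (rule helper_lim[where C = "lam / 2 * (norm (T z))\<^sup>2"])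
    fix t :: real assume t: "0 < t" "t < 1"
    have "tikh T f lam J z \<le> tikh T f lam J ((1 - t) *\<^sub>R z)" by (rule mzy)
    also have "\<dots> = ereal (lam / 2 * (norm (r + (- t) *\<^sub>R T z))\<^sup>2 + (1 - t) * jz)"
    proof -
      have e: "T ((1 - t) *\<^sub>R z) - f = r + (- t) *\<^sub>R T z"
        by (simp add: r_def T.scaleR T.diff scaleR_diff_left)
      have j: "J ((1 - t) *\<^sub>R z) = ereal ((1 - t) * jz)" using t by (simp add: Jh jz)
      show ?thesis unfolding tikh_def e j by simp
    qed
    finally have "lam / 2 * (norm r)\<^sup>2 + jz \<le> lam / 2 * (norm (r + (- t) *\<^sub>R T z))\<^sup>2 + (1 - t) * jz"
      by (simp add: tikh_def jz r_def)
    then have "0 \<le> t * (- lam * inner r (T z) + t * (lam / 2 * (norm (T z))\<^sup>2) - jz)"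
      unfolding norm_expand by (simp add: algebra_simps power2_eq_square)
    then have "0 \<le> - lam * inner r (T z) + t * (lam / 2 * (norm (T z))\<^sup>2) - jz"
      using t by (simp add: zero_le_mult_iff)
    moreover have "lam * inner (f - T z) (T z) = - (lam * inner r (T z))"
      by (simp add: r_def inner_diff_left algebra_simps)
    ultimately show "jz \<le> lam * inner (f - T z) (T z) + t * (lam / 2 * (norm (T z))\<^sup>2)"
      by linarith
  qed (use lam in simp)
  moreover have "lam * inner (f - T z) (T z) \<le> jz" using ineq[of z] jz by simp
  ultimately show "J z = ereal (lam * inner (f - T z) (T z))" using jz by simp
qed

lemma lemmaB:
  fixes T :: "'x::real_normed_vector \<Rightarrow> 'h::real_inner"
  assumes T: "bounded_linear T" and lam: "0 < lam"
    and ineq: "\<forall>v. ereal (lam * inner (f - T z) (T v)) \<le> J v"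
    and eq: "J z = ereal (lam * inner (f - T z) (T z))"
  shows "is_minimizer (tikh T f lam J) z"
  unfolding is_minimizer_def
proof
  fix y
  define s where "s = T y - f"
  define r where "r = T z - f"
  have key: "lam / 2 * (norm r)\<^sup>2 + lam * inner (f - T z) (T z)
      \<le> lam / 2 * (norm s)\<^sup>2 + lam * inner (f - T z) (T y)"
  proof -
    have "0 \<le> lam / 2 * (norm (s + (-1) *\<^sub>R r))\<^sup>2" using lam by simp
    also have "\<dots> = lam / 2 * ((norm s)\<^sup>2 - 2 * inner s r + (norm r)\<^sup>2)"
      unfolding norm_expand by simp
    finally have h: "0 \<le> lam / 2 * ((norm s)\<^sup>2 - 2 * inner s r + (norm r)\<^sup>2)" .
    have i1: "inner (f - T z) (T z) = - inner r r - inner r f"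
      by (simp add: r_def inner_diff_left inner_diff_right inner_commute algebra_simps)
    have i2: "inner (f - T z) (T y) = - inner r s - inner r f"
      by (simp add: r_def s_def inner_diff_left inner_diff_right inner_commute algebra_simps)
    have i3: "(norm r)\<^sup>2 = inner r r" by (simp add: power2_norm_eq_inner)
    show ?thesis using h unfolding i1 i2 i3 by (simp add: inner_commute algebra_simps)
  qed
  have "tikh T f lam J z = ereal (lam / 2 * (norm r)\<^sup>2 + lam * inner (f - T z) (T z))"
    unfolding tikh_def eq r_def by simp
  also have "\<dots> \<le> ereal (lam / 2 * (norm s)\<^sup>2 + lam * inner (f - T z) (T y))"
    using key by simp
  also have "\<dots> = ereal (lam / 2 * (norm s)\<^sup>2) + ereal (lam * inner (f - T z) (T y))" by simp
  also have "\<dots> \<le> ereal (lam / 2 * (norm s)\<^sup>2) + J y"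
    by (rule add_left_mono) (use ineq in blast)
  also have "\<dots> = tikh T f lam J y" unfolding tikh_def s_def ..
  finally show "tikh T f lam J z \<le> tikh T f lam J y" .
qed

theorem mainTheorem11:
  fixes T :: "'x::banach \<Rightarrow> 'h::{real_inner, complete_space}"
    and f :: 'h and J :: "'x \<Rightarrow> ereal" and lam :: "nat \<Rightarrow> real"
    and x :: "nat \<Rightarrow> 'x" and k :: nat
  assumes T: "bounded_linear T"
    and J: "ext_seminorm J"
    and lam_pos: "\<forall>n. 0 < lam n"
    and lam_inc: "incseq lam"
    and mhdm0: "is_minimizer (tikh T f (lam 0) J) (x 0)"
    and mhdm: "\<forall>n. is_minimizer (\<lambda>z. tikh T f (lam (Suc n)) J (z - x n)) (x (Suc n))"
    and xk: "is_minimizer (tikh T f (lam k) J) (x k)"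
  shows "is_minimizer (tikh T f (lam (Suc k)) J) (x (Suc k)) \<longleftrightarrow>
    J (x (Suc k) - x k) - J (x (Suc k))
      - ereal (lam (Suc k) * inner (f - T (x (Suc k))) (T ((x (Suc k) - x k) - x (Suc k)))) = 0"
proof -
  interpret T: bounded_linear T by (rule T)
  define L where "L = lam (Suc k)"
  define u where "u = x (Suc k) - x k"
  define x' where "x' = x (Suc k)"
  have L: "0 < L" using lam_pos by (simp add: L_def)
  have Jnn: "\<And>y. 0 \<le> J y" using J unfolding ext_seminorm_def by blast
  have mu: "is_minimizer (tikh T f L J) u"
    unfolding is_minimizer_def
  proof
    fix y
    have "\<forall>z. tikh T f L J (x (Suc k) - x k) \<le> tikh T f L J (z - x k)"
      using mhdm unfolding is_minimizer_def L_def by blast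
    from this[rule_format, of "y + x k"] show "tikh T f L J u \<le> tikh T f L J y"
      by (simp add: u_def)
  qed
  note Au = lemmaA[OF T J L mu]
  define a where "a = T u"
  define b where "b = T x'"
  have Tdiff: "T (u - x') = a - b" by (simp add: a_def b_def T.diff)
  have nd: "L * (norm (a - b))\<^sup>2 = L * (inner (a - b) (a - b))"
    by (simp add: power2_norm_eq_inner)
  show ?thesis
    unfolding L_def[symmetric] u_def[symmetric] unfolding x'_def[symmetric] Tdiff
  proof
    assume mx: "is_minimizer (tikh T f L J) x'"
    note Ax = lemmaA[OF T J L mx]
    have r1: "L * inner (f - b) a \<le> L * inner (f - a) a"
      using Au(2)[rule_format, of x'] Au(1) Ax(2)[rule_format, of u] Ax(1)
      by (simp add: a_def b_def)
    have r2: "L * inner (f - a) b \<le> L * inner (f - b) b"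
      using Au(2)[rule_format, of x'] Ax(1) by (simp add: a_def b_def)
    have "L * (norm (a - b))\<^sup>2 \<le> 0"
      using r1 r2 unfolding nd
      by (simp add: inner_diff_left inner_diff_right inner_commute algebra_simps)
    then have "a = b" using L
      by (simp add: mult_le_0_iff)
    then show "J u - J x' - ereal (L * inner (f - T x') (a - b)) = 0"
      using Au(1) Ax(1) by (simp add: a_def b_def)
  next
    assume h: "J u - J x' - ereal (L * inner (f - T x') (a - b)) = 0"
    obtain c where c: "J x' = ereal c"
    proof (cases "J x'")
      case (real r) then show ?thesis using that by blast
    next
      case PInf then show ?thesis using h Au(1) by simp
    next
      case MInf then show ?thesis using Jnn[of x'] by simp
    qed
    have hr: "L * inner (f - a) a - c - L * inner (f - b) (a - b) = 0"
      using h Au(1) c by (simp add: a_def b_def)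
    have cge: "L * inner (f - a) b \<le> c"
      using Au(2)[rule_format, of x'] c by (simp add: a_def b_def)
    have "L * (norm (a - b))\<^sup>2 \<le> 0"
      using hr cge unfolding nd
      by (simp add: inner_diff_left inner_diff_right inner_commute algebra_simps)
    then have ab: "a = b" using L
      by (simp add: mult_le_0_iff)
    show "is_minimizer (tikh T f L J) x'"
    proof (rule lemmaB[OF T L])
      show "\<forall>v. ereal (L * inner (f - T x') (T v)) \<le> J v"
        using Au(2) ab by (simp add: a_def b_def)
      show "J x' = ereal (L * inner (f - T x') (T x'))"
        using hr ab c by (simp add: b_def)
    qed
  qed
qed

end
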